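(* Let $\mathcal{K}$ be a finite simplicial complex with a fixed total order on its vertex set, and let $(\Lambda_S,d_S)$ be its stories algebra with the differential $d_S$ described below. Then $\mathcal{I}=\bigoplus_{n\ge1}(\mathcal{I}_N^n\oplus\mathcal{I}_S^n)$ is a differential ideal of $\Lambda_S$: it is a two-sided ideal and $d_S(\mathcal{I}^n)\subseteq\mathcal{I}^{n+1}$ for all $n$, where $\mathcal{I}^n=\mathcal{I}_N^n\oplus\mathcal{I}_S^n$.
   Context: A (finite abstract) simplicial complex $\mathcal{K}$ on a finite non-empty vertex set $V$ is a collection of non-empty subsets of $V$ (simplices) containing every singleton $\{v\}$, $v\in V$, and closed under taking non-empty subsets. $\dim P=|P|-1$. For a simplex $P=\{v_0,\ldots,v_n\}$ listed in increasing order of the fixed vertex order, the incidence coefficient is $\epsilon_{v_iP}=(-1)^i$. Stories: a homogeneous $n$-story is a sequence $\langle P_0,\ldots,P_n\rangle$ of simplices of $\mathcal{K}$ with $P_{i-1}\neq P_i$ for $i=1,\ldots,n$; $\Lambda_S=\bigoplus_{n\ge0}\Lambda_S^n$ where $\Lambda_S^n$ is the complex vector space with basis the homogeneous $n$-stories, with product $\langle P_0,\ldots,P_n\rangle\cdot\langle Q_0,\ldots,Q_m\rangle=\langle P_0,\ldots,P_n,Q_1,\ldots,Q_m\rangle$ if $P_n=Q_0$ and $0$ otherwise. The differential $d_S:\Lambda_S^n\to\Lambda_S^{n+1}$ is the linear map with $d_S\langle P_0,\ldots,P_n\rangle=\sum_{Q\neq P_0}\langle Q,P_0,\ldots,P_n\rangle+\sum_{k=1}^n(-1)^k\sum_{Q:\,P_{k-1}\neq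 Q\neq P_k}\langle P_0,\ldots,P_{k-1},Q,P_k,\ldots,P_n\rangle+(-1)^{n+1}\sum_{Q\neq P_n}\langle P_0,\ldots,P_n,Q\rangle$ (sums over simplices $Q$ of $\mathcal{K}$). A story $\langle P_0,\ldots,P_n\rangle$ is fair if for every $i=1,\ldots,n$ there is a vertex $v_i\in P_i$ with $P_{i-1}=P_i\setminus\{v_i\}$, and unfair otherwise; for a fair story $w$ put $\epsilon_w=\prod_{i=1}^n\epsilon_{v_iP_i}$. $\mathcal{I}_N^n$ is the span of all unfair homogeneous $n$-stories. $\mathcal{I}_S^n$ is the span of all differences $\epsilon_w w-\epsilon_{w'}w'$ where $w=\langle P_0,P_1,\ldots,P_{n-1},P_n\rangle$ and $w'=\langle P_0,P_1',\ldots,P_{n-1}',P_n\rangle$ are fair $n$-stories with the same initial simplex $P_0$ and the same final simplex $P_n$ (so $P_0\subseteq P_n$ and $\dim P_n-\dim P_0=n$). *)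

theory Defs
  imports Complex_Main
begin

text \<open>Finite abstract simplicial complex K on vertex set V; the fixed total vertex order
  is the order of the type 'a.\<close>
definition simplicial_complex :: "'a set \<Rightarrow> 'a set set \<Rightarrow> bool" where
  "simplicial_complex V K \<longleftrightarrow> finite V \<and> V \<noteq> {} \<and>
     (\<forall>P\<in>K. P \<noteq> {} \<and> P \<subseteq> V) \<and> (\<forall>v\<in>V. {v} \<in> K) \<and>
     (\<forall>P\<in>K. \<forall>Q. Q \<noteq> {} \<longrightarrow> Q \<subseteq> P \<longrightarrow> Q \<in> K)"

text \<open>Incidence coefficient: (-1)^i where v is the i-th vertex (from 0) of P.\<close>
definition eps_inc :: "'a::linorder \<Rightarrow> 'a set \<Rightarrow> complex" where
  "eps_inc v P = (-1) ^ card {u\<in>P. u < v}"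

text \<open>A homogeneous n-story is a list [P_0,...,P_n] of simplices, consecutive ones distinct.\<close>
definition story :: "'a set set \<Rightarrow> 'a set list \<Rightarrow> bool" where
  "story K s \<longleftrightarrow> s \<noteq> [] \<and> set s \<subseteq> K \<and> (\<forall>i. 0 < i \<and> i < length s \<longrightarrow> s!(i-1) \<noteq> s!i)"

definition fair :: "'a set list \<Rightarrow> bool" where
  "fair s \<longleftrightarrow> (\<forall>i. 0 < i \<and> i < length s \<longrightarrow> (\<exists>v\<in>s!i. s!(i-1) = s!i - {v}))"

definition eps_story :: "'a::linorder set list \<Rightarrow> complex" where
  "eps_story s = (\<Prod>i\<in>{1..<length s}. eps_inc (THE v. v \<in> s!i \<and> s!(i-1) = s!i - {v}) (s!i))"

text \<open>Elements of Lambda_S: finitely supported complex coefficient functions on stories.\<close>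
definition supp :: "('b \<Rightarrow> complex) \<Rightarrow> 'b set" where
  "supp x = {s. x s \<noteq> 0}"

definition elem :: "'a set set \<Rightarrow> ('a set list \<Rightarrow> complex) \<Rightarrow> bool" where
  "elem K x \<longleftrightarrow> finite (supp x) \<and> (\<forall>s\<in>supp x. story K s)"

definition single :: "'b \<Rightarrow> 'b \<Rightarrow> complex" where
  "single s = (\<lambda>w. if w = s then 1 else 0)"

definition cspan :: "('b \<Rightarrow> complex) set \<Rightarrow> ('b \<Rightarrow> complex) set" where
  "cspan G = {x. \<exists>F c. finite F \<and> F \<subseteq> G \<and> x = (\<lambda>w. \<Sum>g\<in>F. c g * g w)}"

definition smult :: "('a set list \<Rightarrow> complex) \<Rightarrow> ('a set list \<Rightarrow> complex) \<Rightarrow> ('a set list \<Rightarrow> complex)" where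
  "smult x y = (\<lambda>w. \<Sum>u\<in>supp x. \<Sum>v\<in>supp y.
      if u \<noteq> [] \<and> v \<noteq> [] \<and> last u = hd v \<and> w = u @ tl v then x u * y v else 0)"

definition dstory :: "'a set set \<Rightarrow> 'a set list \<Rightarrow> ('a set list \<Rightarrow> complex)" where
  "dstory K s = (\<lambda>w. \<Sum>k\<in>{0..length s}.
      \<Sum>Q\<in>{Q\<in>K. (0 < k \<longrightarrow> Q \<noteq> s!(k-1)) \<and> (k < length s \<longrightarrow> Q \<noteq> s!k)}.
        if w = take k s @ Q # drop k s then (-1) ^ k else 0)"

definition dS :: "'a set set \<Rightarrow> ('a set list \<Rightarrow> complex) \<Rightarrow> ('a set list \<Rightarrow> complex)" where
  "dS K x = (\<lambda>w. \<Sum>s\<in>supp x. x s * dstory K s w)"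

definition genN :: "'a set set \<Rightarrow> nat \<Rightarrow> ('a set list \<Rightarrow> complex) set" where
  "genN K n = {single s | s. story K s \<and> length s = n + 1 \<and> \<not> fair s}"

definition genS :: "'a::linorder set set \<Rightarrow> nat \<Rightarrow> ('a set list \<Rightarrow> complex) set" where
  "genS K n = {(\<lambda>w. eps_story u * single u w - eps_story v * single v w) | u v.
      story K u \<and> story K v \<and> length u = n + 1 \<and> length v = n + 1 \<and> fair u \<and> fair v \<and>
      hd u = hd v \<and> last u = last v}"

definition IN :: "'a set set \<Rightarrow> nat \<Rightarrow> ('a set list \<Rightarrow> complex) set" where
  "IN K n = cspan (genN K n)"

definition IS :: "'a::linorder set set \<Rightarrow> nat \<Rightarrow> ('a set list \<Rightarrow> complex) set" where
  "IS K n = cspan (genS K n)"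

text \<open>I^n = I_N^n + I_S^n (the sum is direct).\<close>
definition Ipart :: "'a::linorder set set \<Rightarrow> nat \<Rightarrow> ('a set list \<Rightarrow> complex) set" where
  "Ipart K n = {(\<lambda>w. x w + y w) | x y. x \<in> IN K n \<and> y \<in> IS K n}"

definition Ideal :: "'a::linorder set set \<Rightarrow> ('a set list \<Rightarrow> complex) set" where
  "Ideal K = cspan (\<Union>n\<in>{1..}. genN K n \<union> genS K n)"

end

theory Submission
  imports Defs
begin


definition closedT :: "('b \<Rightarrow> complex) set \<Rightarrow> bool" where
  "closedT T \<longleftrightarrow> (\<lambda>_. 0) \<in> T \<and> (\<forall>x\<in>T. \<forall>y\<in>T. (\<lambda>w. x w + y w) \<in> T)
     \<and> (\<forall>c. \<forall>x\<in>T. (\<lambda>w. c * x w) \<in> T)"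

lemma closedT_zero: "closedT T \<Longrightarrow> (\<lambda>_. 0) \<in> T"
  by (simp add: closedT_def)
lemma closedT_add: "closedT T \<Longrightarrow> x \<in> T \<Longrightarrow> y \<in> T \<Longrightarrow> (\<lambda>w. x w + y w) \<in> T"
  by (simp add: closedT_def)
lemma closedT_smult: "closedT T \<Longrightarrow> x \<in> T \<Longrightarrow> (\<lambda>w. c * x w) \<in> T"
  by (simp add: closedT_def)
lemma closedT_diff: "closedT T \<Longrightarrow> x \<in> T \<Longrightarrow> y \<in> T \<Longrightarrow> (\<lambda>w. a * x w - b * y w) \<in> T"
proof -
  assume T: "closedT T" "x \<in> T" "y \<in> T"
  have "(\<lambda>w. a * x w + (- b) * y w) \<in> T"
    using closedT_add[OF T(1) closedT_smult[OF T(1) T(2), of a] closedT_smult[OF T(1) T(3), of "-b"]] by simp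
  then show ?thesis by simp
qed

lemma closedT_sum:
  assumes "closedT T" "finite I" "\<forall>i\<in>I. f i \<in> T"
  shows "(\<lambda>w. \<Sum>i\<in>I. c i * f i w) \<in> T"
  using assms(2,3)
proof (induction I rule: finite_induct)
  case empty then show ?case using closedT_zero[OF assms(1)] by simp
next
  case (insert i I)
  have "(\<lambda>w. c i * f i w + (\<Sum>i\<in>I. c i * f i w)) \<in> T"
    using closedT_add[OF assms(1) closedT_smult[OF assms(1)]] insert by simp
  then show ?case using insert by simp
qed

lemma cspan_closed: "closedT (cspan G)"
  unfolding closedT_def
proof (intro conjI ballI allI)
  show "(\<lambda>_. 0) \<in> cspan G" unfolding cspan_def
    by (rule CollectI, rule exI[of _ "{}"]) simp
next
  fix x y assume "x \<in> cspan G" "y \<in> cspan G"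
  then obtain F1 c1 F2 c2 where F: "finite F1" "F1 \<subseteq> G" "x = (\<lambda>w. \<Sum>g\<in>F1. c1 g * g w)"
    "finite F2" "F2 \<subseteq> G" "y = (\<lambda>w. \<Sum>g\<in>F2. c2 g * g w)" unfolding cspan_def by blast
  define c where "c g = (if g \<in> F1 then c1 g else 0) + (if g \<in> F2 then c2 g else 0)" for g
  have "(\<lambda>w. x w + y w) = (\<lambda>w. \<Sum>g\<in>F1 \<union> F2. c g * g w)"
  proof
    fix w
    have e: "c g * g w = (if g \<in> F1 then c1 g * g w else 0) + (if g \<in> F2 then c2 g * g w else 0)" for g
      unfolding c_def by (simp add: distrib_right)
    have "(\<Sum>g\<in>F1 \<union> F2. c g * g w) = (\<Sum>g\<in>F1 \<union> F2. (if g \<in> F1 then c1 g * g w else 0))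
        + (\<Sum>g\<in>F1 \<union> F2. (if g \<in> F2 then c2 g * g w else 0))"
      unfolding e by (simp add: sum.distrib)
    also have "\<dots> = (\<Sum>g\<in>(F1 \<union> F2) \<inter> F1. c1 g * g w) + (\<Sum>g\<in>(F1 \<union> F2) \<inter> F2. c2 g * g w)"
      using F by (simp only: sum.inter_restrict finite_Un)
    also have "\<dots> = (\<Sum>g\<in>F1. c1 g * g w) + (\<Sum>g\<in>F2. c2 g * g w)"
      by (simp add: Int_absorb1)
    finally show "x w + y w = (\<Sum>g\<in>F1 \<union> F2. c g * g w)" using F by simp
  qed
  then show "(\<lambda>w. x w + y w) \<in> cspan G" unfolding cspan_def using F(1,2,4,5)
    by (intro CollectI exI[where x="F1 \<union> F2"] exI[where x=c] conjI) auto
next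
  fix a x assume "x \<in> cspan G"
  then obtain F c where F: "finite F" "F \<subseteq> G" "x = (\<lambda>w. \<Sum>g\<in>F. c g * g w)"
    unfolding cspan_def by blast
  have "(\<lambda>w. a * x w) = (\<lambda>w. \<Sum>g\<in>F. (a * c g) * g w)"
    unfolding F(3) sum_distrib_left by (simp add: mult.assoc)
  then show "(\<lambda>w. a * x w) \<in> cspan G" unfolding cspan_def using F(1,2)
    by (intro CollectI exI[where x="F"] exI[where x="\<lambda>g. a * c g"] conjI) auto
qed

lemma cspan_base: "g \<in> G \<Longrightarrow> g \<in> cspan G"
  unfolding cspan_def
  by (rule CollectI, rule exI[of _ "{g}"], rule exI[of _ "\<lambda>_. 1"]) simp

lemma cspan_sub: "closedT T \<Longrightarrow> G \<subseteq> T \<Longrightarrow> cspan G \<subseteq> T"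
proof
  fix x assume T: "closedT T" "G \<subseteq> T" and "x \<in> cspan G"
  then obtain F c where F: "finite F" "F \<subseteq> G" "x = (\<lambda>w. \<Sum>g\<in>F. c g * g w)"
    unfolding cspan_def by blast
  have "\<forall>g\<in>F. g \<in> T" using F T by blast
  from closedT_sum[OF T(1) F(1) this, of c] F(3) show "x \<in> T" by simp
qed

lemma supp_sum: "supp (\<lambda>w. \<Sum>g\<in>F. c g * g w) \<subseteq> (\<Union>g\<in>F. supp g)"
proof
  fix x assume "x \<in> supp (\<lambda>w. \<Sum>g\<in>F. c g * g w)"
  then have "(\<Sum>g\<in>F. c g * g x) \<noteq> 0" by (simp add: supp_def)
  then obtain g where "g \<in> F" "c g * g x \<noteq> 0" by (meson sum.neutral)
  then show "x \<in> (\<Union>g\<in>F. supp g)" by (auto simp: supp_def)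
qed

lemma cspan_fin: "\<forall>g\<in>G. finite (supp g) \<Longrightarrow> x \<in> cspan G \<Longrightarrow> finite (supp x)"
proof -
  assume a: "\<forall>g\<in>G. finite (supp g)" "x \<in> cspan G"
  then obtain F c where F: "finite F" "F \<subseteq> G" "x = (\<lambda>w. \<Sum>g\<in>F. c g * g w)"
    unfolding cspan_def by blast
  have "finite (\<Union>g\<in>F. supp g)" using F a by blast
  then show ?thesis using supp_sum[of c F] F(3) by (metis rev_finite_subset)
qed

definition lin :: "('b \<Rightarrow> 'c \<Rightarrow> complex) \<Rightarrow> ('b \<Rightarrow> complex) \<Rightarrow> 'c \<Rightarrow> complex" where
  "lin M x = (\<lambda>w. \<Sum>s\<in>supp x. x s * M s w)"

lemma lin_superset: "finite A \<Longrightarrow> supp x \<subseteq> A \<Longrightarrow> lin M x w = (\<Sum>s\<in>A. x s * M s w)"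
  unfolding lin_def by (rule sum.mono_neutral_left) (auto simp: supp_def)

lemma lin_sum:
  assumes "finite F" "\<forall>g\<in>F. finite (supp g)"
  shows "lin M (\<lambda>w. \<Sum>g\<in>F. c g * g w) = (\<lambda>w. \<Sum>g\<in>F. c g * lin M g w)"
proof
  fix w
  define A where "A = (\<Union>g\<in>F. supp g)"
  have fA: "finite A" using assms unfolding A_def by blast
  have "supp (\<lambda>w. \<Sum>g\<in>F. c g * g w) \<subseteq> A" unfolding A_def by (rule supp_sum)
  then have "lin M (\<lambda>w. \<Sum>g\<in>F. c g * g w) w = (\<Sum>s\<in>A. (\<Sum>g\<in>F. c g * g s) * M s w)"
    by (rule lin_superset[OF fA])
  also have "\<dots> = (\<Sum>g\<in>F. c g * (\<Sum>s\<in>A. g s * M s w))"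
    unfolding sum_distrib_right sum_distrib_left mult.assoc by (rule sum.swap)
  also have "\<dots> = (\<Sum>g\<in>F. c g * lin M g w)"
  proof (intro sum.cong refl)
    fix g assume "g \<in> F"
    then have "supp g \<subseteq> A" unfolding A_def by blast
    then show "c g * (\<Sum>s\<in>A. g s * M s w) = c g * lin M g w"
      using lin_superset[OF fA] by metis
  qed
  finally show "lin M (\<lambda>w. \<Sum>g\<in>F. c g * g w) w = (\<Sum>g\<in>F. c g * lin M g w)" .
qed

lemma lin_cspan_into:
  assumes "closedT T" "x \<in> cspan G" "\<forall>g\<in>G. finite (supp g) \<and> lin M g \<in> T"
  shows "lin M x \<in> T"
proof -
  obtain F c where F: "finite F" "F \<subseteq> G" "x = (\<lambda>w. \<Sum>g\<in>F. c g * g w)"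
    using assms(2) unfolding cspan_def by blast
  have "lin M x = (\<lambda>w. \<Sum>g\<in>F. c g * lin M g w)"
    using F assms(3) by (simp add: lin_sum subset_iff)
  then show ?thesis using closedT_sum[OF assms(1) F(1)] F(2) assms(3) by auto
qed

lemma supp_single: "supp (single s) = {s}"
  by (simp add: supp_def single_def)

lemma lin_single: "lin M (single s) = M s"
proof
  fix w
  have "lin M (single s) w = (\<Sum>t\<in>{s}. single s t * M t w)"
    unfolding lin_def supp_single by simp
  then show "lin M (single s) w = M s w" by (simp add: single_def)
qed

lemma lin_comb:
  assumes "finite (supp f)" "finite (supp g)"
  shows "lin M (\<lambda>w. a * f w + b * g w) = (\<lambda>w. a * lin M f w + b * lin M g w)"
proof
  fix w
  let ?A = "supp f \<union> supp g"
  have s: "supp (\<lambda>w. a * f w + b * g w) \<subseteq> ?A" by (auto simp: supp_def)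
  show "lin M (\<lambda>w. a * f w + b * g w) w = a * lin M f w + b * lin M g w"
  proof -
    have fA: "finite ?A" using assms by simp
    have 1: "lin M (\<lambda>w. a * f w + b * g w) w = (\<Sum>s\<in>?A. (a * f s + b * g s) * M s w)"
      by (rule lin_superset[OF fA s])
    have 2: "lin M f w = (\<Sum>s\<in>?A. f s * M s w)" by (rule lin_superset[OF fA]) simp
    have 3: "lin M g w = (\<Sum>s\<in>?A. g s * M s w)" by (rule lin_superset[OF fA]) simp
    show ?thesis unfolding 1 2 3 distrib_right sum.distrib sum_distrib_left mult.assoc ..
  qed
qed

lemma lin_diff:
  assumes "finite (supp f)" "finite (supp g)"
  shows "lin M (\<lambda>w. a * f w - b * g w) = (\<lambda>w. a * lin M f w - b * lin M g w)"
  using lin_comb[OF assms, of M a "-b"] by simp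

lemma lin_add:
  assumes "finite (supp f)" "finite (supp g)"
  shows "lin M (\<lambda>w. f w + g w) = (\<lambda>w. lin M f w + lin M g w)"
  using lin_comb[OF assms, of M 1 1] by simp



definition fr :: "'a set \<Rightarrow> 'a set \<Rightarrow> bool" where
  "fr P Q \<longleftrightarrow> (\<exists>v\<in>Q. P = Q - {v})"

lemma fair_succ: "fair s = successively fr s"
  unfolding fair_def successively_conv_nth fr_def
proof (intro iffI allI impI)
  fix i assume a: "\<forall>i. 0 < i \<and> i < length s \<longrightarrow> (\<exists>v\<in>s ! i. s ! (i - 1) = s ! i - {v})" "Suc i < length s"
  show "\<exists>v\<in>s ! Suc i. s ! i = s ! Suc i - {v}" using a(1)[rule_format, of "Suc i"] a(2) by simp
next
  fix i assume a: "\<forall>i. Suc i < length s \<longrightarrow> (\<exists>v\<in>s ! Suc i. s ! i = s ! Suc i - {v})" "0 < i \<and> i < length s"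
  then obtain j where "i = Suc j" by (cases i) auto
  then show "\<exists>v\<in>s ! i. s ! (i - 1) = s ! i - {v}" using a by simp
qed

lemma succ_neq_nth: "successively (\<noteq>) s \<longleftrightarrow> (\<forall>i. 0 < i \<and> i < length s \<longrightarrow> s!(i-1) \<noteq> s!i)"
  unfolding successively_conv_nth
proof (intro iffI allI impI)
  fix i assume a: "\<forall>i. Suc i < length s \<longrightarrow> s ! i \<noteq> s ! Suc i" "0 < i \<and> i < length s"
  then obtain j where "i = Suc j" by (cases i) auto
  then show "s ! (i - 1) \<noteq> s ! i" using a by simp
next
  fix i assume a: "\<forall>i. 0 < i \<and> i < length s \<longrightarrow> s ! (i - 1) \<noteq> s ! i" "Suc i < length s"
  show "s ! i \<noteq> s ! Suc i" using a(1)[rule_format, of "Suc i"] a(2) by simp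
qed

lemma story_succ: "story K s \<longleftrightarrow> s \<noteq> [] \<and> set s \<subseteq> K \<and> successively (\<noteq>) s"
  unfolding story_def succ_neq_nth by simp

definition e2 :: "'a::linorder set \<Rightarrow> 'a set \<Rightarrow> complex" where
  "e2 P Q = eps_inc (THE v. v \<in> Q \<and> P = Q - {v}) Q"

fun ep :: "'a::linorder set list \<Rightarrow> complex" where
  "ep (x # y # r) = e2 x y * ep (y # r)"
| "ep _ = 1"

lemma eps_story_Cons2: "eps_story (x # y # r) = e2 x y * eps_story (y # r)"
proof -
  define s where "s = x # y # r"
  define f where "f i = eps_inc (THE v. v \<in> s!i \<and> s!(i-1) = s!i - {v}) (s!i)" for i
  have "eps_story s = prod f {1..<Suc (Suc (length r))}"
    unfolding eps_story_def f_def s_def by simp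
  also have "\<dots> = f 1 * prod f {Suc 1..<Suc (Suc (length r))}"
    by (rule prod.atLeast_Suc_lessThan) simp
  also have "prod f {Suc 1..<Suc (Suc (length r))} = prod (\<lambda>i. f (Suc i)) {1..<Suc (length r)}"
    by (rule prod.shift_bounds_Suc_ivl)
  also have "\<dots> = eps_story (y # r)"
    unfolding eps_story_def f_def s_def
    by (intro prod.cong refl) (auto simp: nth_Cons split: nat.split)
  finally show ?thesis unfolding s_def f_def e2_def by simp
qed

lemma eps_story_ep: "eps_story s = ep s"
proof (induction s rule: ep.induct)
  case (1 x y r)
  then show ?case by (simp add: eps_story_Cons2)
next
  case "2_1" then show ?case by (simp add: eps_story_def)
next
  case ("2_2" v) then show ?case by (simp add: eps_story_def)
qed

lemma ep_append: "x \<noteq> [] \<Longrightarrow> y \<noteq> [] \<Longrightarrow> ep (x @ y) = ep x * e2 (last x) (hd y) * ep y"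
proof (induction x rule: ep.induct)
  case (1 a b r)
  then show ?case by simp
next
  case "2_1" then show ?case by simp
next
  case ("2_2" v) then show ?case by (cases y) auto
qed

lemma ep_concat:
  assumes "x \<noteq> []" "y \<noteq> []" "last x = hd y"
  shows "ep (x @ tl y) = ep x * ep y"
proof (cases "tl y = []")
  case True
  then obtain b where "y = [b]" using assms(2) by (cases y) auto
  then show ?thesis by simp
next
  case False
  obtain b r where y: "y = b # r" using assms(2) by (cases y) auto
  then obtain c r' where r: "r = c # r'" using False by (cases r) auto
  show ?thesis using ep_append[OF assms(1) False] assms(3) y r by simp
qed

lemma succ_concat:
  assumes "x \<noteq> []" "y \<noteq> []" "last x = hd y"
  shows "successively P (x @ tl y) \<longleftrightarrow> successively P x \<and> successively P y"
proof -
  obtain b r where y: "y = b # r" using assms(2) by (cases y) auto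
  show ?thesis using assms y
    by (auto simp: successively_append_iff successively_Cons)
qed

lemma last_take_nth: "0 < k \<Longrightarrow> k \<le> length s \<Longrightarrow> last (take k s) = s ! (k - 1)"
proof -
  assume a: "0 < k" "k \<le> length s"
  then have ne: "take k s \<noteq> []" by auto
  have "last (take k s) = take k s ! (length (take k s) - 1)" by (rule last_conv_nth[OF ne])
  also have "\<dots> = s ! (k - 1)" using a by (simp add: min_def)
  finally show ?thesis .
qed

lemma succ_ins:
  assumes "k \<le> length s"
  shows "successively P (take k s @ Q # drop k s) \<longleftrightarrow> successively P (take k s) \<and>
     successively P (drop k s) \<and> (0 < k \<longrightarrow> P (s!(k-1)) Q) \<and> (k < length s \<longrightarrow> P Q (s!k))"
proof -
  have t: "take k s = [] \<longleftrightarrow> k = 0 \<or> s = []" by auto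
  have d: "drop k s = [] \<longleftrightarrow> length s \<le> k" by auto
  show ?thesis using assms
    by (auto simp: successively_append_iff successively_Cons t d last_take_nth hd_drop_conv_nth
        hd_conv_nth last_conv_nth)
qed

lemma succ_split:
  assumes "k \<le> length s"
  shows "successively P s \<longleftrightarrow> successively P (take k s) \<and>
     successively P (drop k s) \<and> (0 < k \<and> k < length s \<longrightarrow> P (s!(k-1)) (s!k))"
proof -
  have e: "successively P (take k s @ drop k s) \<longleftrightarrow> successively P (take k s) \<and> successively P (drop k s) \<and>
     (take k s = [] \<or> drop k s = [] \<or> P (last (take k s)) (hd (drop k s)))"
    by (rule successively_append_iff)
  show ?thesis
  proof (cases "0 < k \<and> k < length s")
    case True
    then have "take k s \<noteq> []" "drop k s \<noteq> []" by auto
    then show ?thesis using e True assms by (simp add: last_take_nth hd_drop_conv_nth)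
  next
    case False
    then have "take k s = [] \<or> drop k s = []" using assms by auto
    then show ?thesis using e False by auto
  qed
qed

lemma eps_inc_sq: "eps_inc v P * eps_inc v P = 1"
  by (simp add: eps_inc_def power_mult_distrib[symmetric])

lemma e2_sq: "e2 P Q * e2 P Q = 1"
  unfolding e2_def by (rule eps_inc_sq)

lemma ep_sq: "ep s * ep s = 1"
proof (induction s rule: ep.induct)
  case (1 x y r)
  have "ep (x # y # r) * ep (x # y # r) = (e2 x y * e2 x y) * (ep (y # r) * ep (y # r))"
    by (simp only: ep.simps mult_ac)
  also have "\<dots> = 1" unfolding 1 e2_sq by simp
  finally show ?case .
qed auto

lemma the_fr: "y \<in> Q \<Longrightarrow> P = Q - {y} \<Longrightarrow> (THE v. v \<in> Q \<and> P = Q - {v}) = y"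
  by (rule the_equality) auto

lemma e2_eq: "y \<in> Q \<Longrightarrow> P = Q - {y} \<Longrightarrow> e2 P Q = eps_inc y Q"
  unfolding e2_def using the_fr by metis

lemma sign_lt:
  assumes "finite R" "x \<in> R" "y \<in> R" "x < y"
  shows "eps_inc y (R - {x}) * eps_inc x R = - (eps_inc x (R - {y}) * eps_inc y R)"
proof -
  have 1: "{u \<in> R - {x}. u < y} = {u\<in>R. u < y} - {x}" by auto
  have x: "x \<in> {u\<in>R. u < y}" using assms by auto
  have f: "finite {u\<in>R. u < y}" using assms by simp
  have c1: "card {u \<in> R - {x}. u < y} = card {u\<in>R. u < y} - 1"
    unfolding 1 using x f by simp
  have pos: "card {u\<in>R. u < y} \<ge> 1" using x f by (metis One_nat_def Suc_leI card_gt_0_iff empty_iff)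
  have 2: "{u \<in> R - {y}. u < x} = {u\<in>R. u < x}" using assms by auto
  obtain m where m: "card {u\<in>R. u < y} = Suc m" using pos by (cases "card {u\<in>R. u < y}") auto
  show ?thesis unfolding eps_inc_def c1 2 m by simp
qed

lemma sign_swap:
  assumes "finite R" "x \<in> R" "y \<in> R" "x \<noteq> y"
  shows "eps_inc y (R - {x}) * eps_inc x R = - (eps_inc x (R - {y}) * eps_inc y R)"
proof (cases "x < y")
  case True then show ?thesis using sign_lt assms by blast
next
  case False
  then have "y < x" using assms(4) by simp
  from sign_lt[OF assms(1,3,2) this] show ?thesis by simp
qed



lemma sc_finite: "simplicial_complex V K \<Longrightarrow> finite K"
  unfolding simplicial_complex_def
  by (metis Pow_iff finite_Pow_iff rev_finite_subset subsetI)

lemma sc_fin_simplex: "simplicial_complex V K \<Longrightarrow> P \<in> K \<Longrightarrow> finite P"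
  unfolding simplicial_complex_def by (meson rev_finite_subset)

lemma sc_ne: "simplicial_complex V K \<Longrightarrow> P \<in> K \<Longrightarrow> P \<noteq> {}"
  unfolding simplicial_complex_def by blast

lemma sc_sub: "simplicial_complex V K \<Longrightarrow> P \<in> K \<Longrightarrow> Q \<noteq> {} \<Longrightarrow> Q \<subseteq> P \<Longrightarrow> Q \<in> K"
  unfolding simplicial_complex_def by blast

lemma closedT_sum1:
  assumes "closedT T" "finite I" "\<forall>i\<in>I. f i \<in> T"
  shows "(\<lambda>w. \<Sum>i\<in>I. f i w) \<in> T"
  using closedT_sum[OF assms, of "\<lambda>_. 1"] by simp

lemma sum_filter_split:
  "finite S \<Longrightarrow> sum f S = sum f {x\<in>S. P x} + sum f {x\<in>S. \<not> P x}"
proof -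
  assume fS: "finite S"
  have e: "S = {x\<in>S. P x} \<union> {x\<in>S. \<not> P x}" by auto
  have "sum f S = sum f ({x\<in>S. P x} \<union> {x\<in>S. \<not> P x})" using e by simp
  also have "\<dots> = sum f {x\<in>S. P x} + sum f {x\<in>S. \<not> P x}"
    by (rule sum.union_disjoint) (use fS in auto)
  finally show ?thesis .
qed

definition ins :: "nat \<Rightarrow> 'b \<Rightarrow> 'b list \<Rightarrow> 'b list" where
  "ins k Q s = take k s @ Q # drop k s"

definition SK :: "'a set set \<Rightarrow> 'a set list \<Rightarrow> nat \<Rightarrow> 'a set set" where
  "SK K s k = {Q\<in>K. (0 < k \<longrightarrow> Q \<noteq> s!(k-1)) \<and> (k < length s \<longrightarrow> Q \<noteq> s!k)}"

lemma dstory_eq: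
  "dstory K s = (\<lambda>w. \<Sum>k\<in>{0..length s}. \<Sum>Q\<in>SK K s k. (-1)^k * single (ins k Q s) w)"
  unfolding dstory_def SK_def ins_def single_def
  by (intro ext sum.cong refl) simp

definition DU :: "'a::linorder set set \<Rightarrow> 'a set list \<Rightarrow> 'a set list \<Rightarrow> complex" where
  "DU K s = (\<lambda>w. \<Sum>k\<in>{0..length s}. \<Sum>Q\<in>{Q\<in>SK K s k. \<not> fair (ins k Q s)}. (-1)^k * single (ins k Q s) w)"

definition DF :: "'a::linorder set set \<Rightarrow> 'a set list \<Rightarrow> 'a set list \<Rightarrow> complex" where
  "DF K s = (\<lambda>w. \<Sum>k\<in>{0..length s}. \<Sum>Q\<in>{Q\<in>SK K s k. fair (ins k Q s)}. (-1)^k * single (ins k Q s) w)"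

lemma SK_fin: "finite K \<Longrightarrow> finite (SK K s k)"
  unfolding SK_def by simp

lemma dstory_split: "finite K \<Longrightarrow> dstory K s = (\<lambda>w. DU K s w + DF K s w)"
  unfolding dstory_eq DU_def DF_def
proof (rule ext)
  fix w assume fK: "finite K"
  have "(\<Sum>Q\<in>SK K s k. (-1)^k * single (ins k Q s) w) =
     (\<Sum>Q\<in>{Q\<in>SK K s k. \<not> fair (ins k Q s)}. (-1)^k * single (ins k Q s) w) +
     (\<Sum>Q\<in>{Q\<in>SK K s k. fair (ins k Q s)}. (-1)^k * single (ins k Q s) w)" for k
    using sum_filter_split[OF SK_fin[OF fK], where f="\<lambda>Q. (-1)^k * single (ins k Q s) w" and P="\<lambda>Q. \<not> fair (ins k Q s)"]
    by (simp add: add.commute)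
  then show "(\<Sum>k\<in>{0..length s}. \<Sum>Q\<in>SK K s k. (-1)^k * single (ins k Q s) w) =
    (\<Sum>k\<in>{0..length s}. \<Sum>Q\<in>{Q\<in>SK K s k. \<not> fair (ins k Q s)}. (-1)^k * single (ins k Q s) w) +
    (\<Sum>k\<in>{0..length s}. \<Sum>Q\<in>{Q\<in>SK K s k. fair (ins k Q s)}. (-1)^k * single (ins k Q s) w)"
    by (simp add: sum.distrib)
qed

lemma length_ins: "k \<le> length s \<Longrightarrow> length (ins k Q s) = length s + 1"
  unfolding ins_def by simp

lemma story_ins:
  assumes "story K s" "k \<le> length s" "Q \<in> SK K s k"
  shows "story K (ins k Q s)"
proof -
  have s: "s \<noteq> []" "set s \<subseteq> K" "successively (\<noteq>) s" using assms(1) story_succ by blast+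
  have td: "successively (\<noteq>) (take k s)" "successively (\<noteq>) (drop k s)"
    using succ_split[OF assms(2)] s(3) by blast+
  have "set (ins k Q s) \<subseteq> K" using s(2) assms(3) unfolding ins_def SK_def
    by (auto dest: in_set_takeD in_set_dropD)
  moreover have "successively (\<noteq>) (ins k Q s)"
    unfolding ins_def succ_ins[OF assms(2)] using td assms(3) unfolding SK_def by auto
  ultimately show ?thesis unfolding story_succ ins_def by simp
qed

lemma fair_ins:
  assumes "k \<le> length s"
  shows "fair (ins k Q s) \<longleftrightarrow> fair (take k s) \<and> fair (drop k s) \<and>
     (0 < k \<longrightarrow> fr (s!(k-1)) Q) \<and> (k < length s \<longrightarrow> fr Q (s!k))"
  unfolding ins_def fair_succ by (rule succ_ins[OF assms])

lemma fair_split: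
  assumes "k \<le> length s"
  shows "fair s \<longleftrightarrow> fair (take k s) \<and> fair (drop k s) \<and> (0 < k \<and> k < length s \<longrightarrow> fr (s!(k-1)) (s!k))"
  unfolding fair_succ by (rule succ_split[OF assms])

lemma DU_in:
  assumes "finite K" "story K s"
  shows "DU K s \<in> IN K (length s)"
  unfolding DU_def IN_def
proof (rule closedT_sum1[OF cspan_closed], simp, intro ballI)
  fix k assume k: "k \<in> {0..length s}"
  show "(\<lambda>w. \<Sum>Q\<in>{Q \<in> SK K s k. \<not> fair (ins k Q s)}. (- 1) ^ k * single (ins k Q s) w) \<in> cspan (genN K (length s))"
  proof (rule closedT_sum[OF cspan_closed])
    show "finite {Q \<in> SK K s k. \<not> fair (ins k Q s)}" using SK_fin[OF assms(1)] by simp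
    show "\<forall>Q\<in>{Q \<in> SK K s k. \<not> fair (ins k Q s)}. single (ins k Q s) \<in> cspan (genN K (length s))"
    proof
      fix Q assume Q: "Q \<in> {Q \<in> SK K s k. \<not> fair (ins k Q s)}"
      have "story K (ins k Q s)" "length (ins k Q s) = length s + 1" "\<not> fair (ins k Q s)"
        using story_ins[OF assms(2)] length_ins k Q by auto
      then have "single (ins k Q s) \<in> genN K (length s)"
        unfolding genN_def by blast
      then show "single (ins k Q s) \<in> cspan (genN K (length s))" by (rule cspan_base)
    qed
  qed
qed

lemma fr_neq: "fr P Q \<Longrightarrow> P \<noteq> Q"
  unfolding fr_def by auto

lemma fr_tri: "fr P Q \<Longrightarrow> fr Q R \<Longrightarrow> fr P R \<Longrightarrow> False"
  unfolding fr_def by blast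



lemma fair_Nil: "fair []" by (simp add: fair_def)

lemma ep_ins:
  assumes "0 < k" "k < length s"
  shows "ep (ins k Q s) = ep (take k s) * e2 (s!(k-1)) Q * e2 Q (s!k) * ep (drop k s)"
proof -
  have d: "drop k s = s!k # drop (Suc k) s" using assms(2) by (rule Cons_nth_drop_Suc[symmetric])
  have t: "take k s \<noteq> []" using assms by auto
  have "ep (ins k Q s) = ep (take k s) * e2 (last (take k s)) Q * ep (Q # drop k s)"
    unfolding ins_def using ep_append[OF t, of "Q # drop k s"] by simp
  also have "ep (Q # drop k s) = e2 Q (s!k) * ep (drop k s)" by (subst (1 2) d) simp
  finally show ?thesis using last_take_nth[of k s] assms by (simp add: mult.assoc)
qed

lemma DF_fair:
  assumes sc: "simplicial_complex V K" and st: "story K s" and fs: "fair s"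
  shows "DF K s = (\<lambda>w. (\<Sum>Q\<in>{Q\<in>K. fr Q (hd s)}. single (Q # s) w)
      + (-1)^(length s) * (\<Sum>Q\<in>{Q\<in>K. fr (last s) Q}. single (s @ [Q]) w))"
proof (rule ext)
  fix w
  have sne: "s \<noteq> []" using st by (simp add: story_def)
  then obtain m where m: "length s = Suc m" by (cases s) auto
  define g where "g k = (\<Sum>Q\<in>{Q\<in>SK K s k. fair (ins k Q s)}. (-1)^k * single (ins k Q s) w)" for k
  have "DF K s w = sum g {0..Suc m}" unfolding DF_def g_def m by simp
  also have "\<dots> = g 0 + sum g {Suc 0..m} + g (Suc m)"
    by (simp add: sum.atLeast0_atMost_Suc sum.atLeast_Suc_atMost)
  also have "sum g {Suc 0..m} = 0"
  proof (rule sum.neutral, rule ballI)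
    fix k assume k: "k \<in> {Suc 0..m}"
    have E: "{Q\<in>SK K s k. fair (ins k Q s)} = {}"
    proof (rule ccontr)
      assume "{Q\<in>SK K s k. fair (ins k Q s)} \<noteq> {}"
      then obtain Q where "fair (ins k Q s)" by blast
      then have "fr (s!(k-1)) Q" "fr Q (s!k)" using fair_ins[of k s Q] k m by auto
      moreover have "fr (s!(k-1)) (s!k)" using fair_split[of k s] fs k m by auto
      ultimately show False using fr_tri by blast
    qed
    show "g k = 0" unfolding g_def E by (rule sum.empty)
  qed
  also have "g 0 = (\<Sum>Q\<in>{Q\<in>K. fr Q (hd s)}. single (Q # s) w)"
  proof -
    have "{Q\<in>SK K s 0. fair (ins 0 Q s)} = {Q\<in>K. fr Q (hd s)}"
      using fair_ins[of 0 s] fs sne fr_neq by (auto simp: SK_def fair_Nil hd_conv_nth)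
    moreover have "ins 0 Q s = Q # s" for Q by (simp add: ins_def)
    ultimately show ?thesis unfolding g_def by simp
  qed
  also have "g (Suc m) = (-1)^(length s) * (\<Sum>Q\<in>{Q\<in>K. fr (last s) Q}. single (s @ [Q]) w)"
  proof -
    have l: "last s = s ! m" using sne m by (simp add: last_conv_nth)
    have "{Q\<in>SK K s (Suc m). fair (ins (Suc m) Q s)} = {Q\<in>K. fr (last s) Q}"
      using fair_ins[of "Suc m" s] fs sne fr_neq m l by (auto simp: SK_def fair_Nil)
    moreover have "ins (Suc m) Q s = s @ [Q]" for Q using m by (simp add: ins_def)
    ultimately show ?thesis unfolding g_def m by (simp add: sum_distrib_left)
  qed
  finally show "DF K s w = (\<Sum>Q\<in>{Q\<in>K. fr Q (hd s)}. single (Q # s) w)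
      + (-1)^(length s) * (\<Sum>Q\<in>{Q\<in>K. fr (last s) Q}. single (s @ [Q]) w)" by simp
qed


lemma hd_ins: "0 < k \<Longrightarrow> k < length s \<Longrightarrow> hd (ins k Q s) = hd (take k s)"
  unfolding ins_def by (cases s) auto

lemma last_ins: "k < length s \<Longrightarrow> last (ins k Q s) = last (drop k s)"
  unfolding ins_def by simp

lemma DF_unfair:
  assumes sc: "simplicial_complex V K" and st: "story K s" and nf: "\<not> fair s"
  shows "DF K s \<in> IS K (length s)"
  unfolding DF_def IS_def
proof (rule closedT_sum1[OF cspan_closed], simp, intro ballI)
  fix k assume kin: "k \<in> {0..length s}"
  then have kle: "k \<le> length s" by simp
  define E where "E = {Q\<in>SK K s k. fair (ins k Q s)}"
  have main: "(\<lambda>w. \<Sum>Q\<in>E. (-1)^k * single (ins k Q s) w) \<in> cspan (genS K (length s))"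
  proof (cases "E = {}")
    case True
    then show ?thesis using closedT_zero[OF cspan_closed] by simp
  next
    case False
    then obtain Q0 where Q0: "Q0 \<in> E" by blast
    have ft: "fair (take k s)" and fd: "fair (drop k s)"
      and h1: "0 < k \<longrightarrow> fr (s!(k-1)) Q0" and h2: "k < length s \<longrightarrow> fr Q0 (s!k)"
      using Q0 fair_ins[OF kle, of Q0] unfolding E_def by auto
    have k0: "k \<noteq> 0"
    proof
      assume "k = 0" then show False using fd nf by simp
    qed
    have kl: "k \<noteq> length s" using ft nf by auto
    have kpos: "0 < k" and klt: "k < length s" using k0 kl kle by auto
    define P where "P = s!(k-1)"
    define R where "R = s!k"
    have nPR: "\<not> fr P R" using fair_split[OF kle] ft fd nf kpos klt unfolding P_def R_def by auto
    obtain x where x: "x \<in> R" "Q0 = R - {x}"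
      using h2 klt unfolding fr_def R_def by auto
    obtain y where y: "y \<in> Q0" "P = Q0 - {y}" using h1 kpos unfolding fr_def P_def by auto
    have yR: "y \<in> R" "x \<noteq> y" using y x by auto
    have PR: "P = R - {x} - {y}" using x y by simp
    have RK: "R \<in> K" "P \<in> K" using st klt kpos unfolding story_def R_def P_def by auto
    have finR: "finite R" using sc_fin_simplex[OF sc RK(1)] .
    have Pne: "P \<noteq> {}" using sc_ne[OF sc RK(2)] .
    have QyK: "R - {y} \<in> K"
      by (rule sc_sub[OF sc RK(1)]) (use Pne PR in auto)
    have QxK: "R - {x} \<in> K" using Q0 x unfolding E_def SK_def by auto
    have Eeq: "E = {R - {x}, R - {y}}"
    proof
      show "E \<subseteq> {R - {x}, R - {y}}"
      proof
        fix Q assume Q: "Q \<in> E"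
        then have "fr P Q" "fr Q R" using fair_ins[OF kle, of Q] kpos klt unfolding E_def P_def R_def by auto
        then obtain x' y' where "x' \<in> R" "Q = R - {x'}" "y' \<in> Q" "P = Q - {y'}" unfolding fr_def by auto
        then show "Q \<in> {R - {x}, R - {y}}" using PR x yR by blast
      qed
    next
      have "R - {y} \<in> E"
      proof -
        have "R - {y} \<in> SK K s k" unfolding SK_def using QyK kpos klt PR yR x
          unfolding P_def[symmetric] R_def[symmetric] by auto
        moreover have "fair (ins k (R - {y}) s)"
          unfolding fair_ins[OF kle] P_def[symmetric] R_def[symmetric] using ft fd kpos klt
          unfolding fr_def using PR yR x by blast
        ultimately show ?thesis unfolding E_def by simp
      qed
      then show "{R - {x}, R - {y}} \<subseteq> E" using Q0 x by auto
    qed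
    have neq: "R - {x} \<noteq> R - {y}" using x yR by auto
    define sx where "sx = ins k (R - {x}) s"
    define sy where "sy = ins k (R - {y}) s"
    have epx: "ep sx = ep (take k s) * (eps_inc y (R - {x}) * eps_inc x R) * ep (drop k s)"
    proof -
      have "e2 P (R - {x}) = eps_inc y (R - {x})" by (rule e2_eq) (use yR PR in auto)
      moreover have "e2 (R - {x}) R = eps_inc x R" by (rule e2_eq) (use x in auto)
      ultimately show ?thesis unfolding sx_def ep_ins[OF kpos klt] P_def R_def by (simp add: mult.assoc)
    qed
    have epy: "ep sy = ep (take k s) * (eps_inc x (R - {y}) * eps_inc y R) * ep (drop k s)"
    proof -
      have "e2 P (R - {y}) = eps_inc x (R - {y})" by (rule e2_eq) (use yR PR x in auto)
      moreover have "e2 (R - {y}) R = eps_inc y R" by (rule e2_eq) (use yR in auto)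
      ultimately show ?thesis unfolding sy_def ep_ins[OF kpos klt] P_def R_def by (simp add: mult.assoc)
    qed
    have epxy: "ep sy = - ep sx"
      unfolding epx epy using sign_swap[OF finR x(1) yR(1) yR(2)] by simp
    define gen where "gen = (\<lambda>w. eps_story sx * single sx w - eps_story sy * single sy w)"
    have gen_in: "gen \<in> genS K (length s)"
    proof -
      have sxE: "R - {x} \<in> E" and syE: "R - {y} \<in> E" using Eeq by auto
      have "story K sx" "story K sy" using story_ins[OF st kle] sxE syE unfolding sx_def sy_def E_def by auto
      moreover have "fair sx" "fair sy" using sxE syE unfolding sx_def sy_def E_def by auto
      moreover have "length sx = length s + 1" "length sy = length s + 1"
        unfolding sx_def sy_def using length_ins[OF kle] by auto
      moreover have "hd sx = hd sy" unfolding sx_def sy_def using hd_ins[OF kpos klt] by simp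
      moreover have "last sx = last sy" unfolding sx_def sy_def using last_ins[OF klt] by simp
      ultimately show ?thesis unfolding genS_def gen_def by blast
    qed
    have "(\<lambda>w. \<Sum>Q\<in>E. (-1)^k * single (ins k Q s) w) = (\<lambda>w. ((-1)^k * ep sx) * gen w)"
    proof
      fix w
      have "(\<Sum>Q\<in>E. (-1)^k * single (ins k Q s) w) = (-1)^k * single sx w + (-1)^k * single sy w"
        unfolding Eeq sx_def sy_def using neq by simp
      also have "\<dots> = ((-1)^k * ep sx) * gen w"
      proof -
        have "((-1)^k * ep sx) * gen w = (-1)^k * (ep sx * ep sx) * (single sx w + single sy w)"
          unfolding gen_def eps_story_ep epxy by (simp add: algebra_simps)
        then show ?thesis unfolding ep_sq by (simp add: algebra_simps)
      qed
      finally show "(\<Sum>Q\<in>E. (-1)^k * single (ins k Q s) w) = ((-1)^k * ep sx) * gen w" .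
    qed
    then show ?thesis using closedT_smult[OF cspan_closed cspan_base[OF gen_in]] by simp
  qed
  then show "(\<lambda>w. \<Sum>Q\<in>{Q\<in>SK K s k. fair (ins k Q s)}. (-1)^k * single (ins k Q s) w) \<in> cspan (genS K (length s))"
    unfolding E_def .
qed



lemma Ipart_I: "x \<in> IN K n \<Longrightarrow> y \<in> IS K n \<Longrightarrow> (\<lambda>w. x w + y w) \<in> Ipart K n"
  unfolding Ipart_def by blast

lemma Ipart_closed: "closedT (Ipart K n)"
  unfolding closedT_def
proof (intro conjI ballI allI)
  show "(\<lambda>_. 0) \<in> Ipart K n" unfolding Ipart_def
    using closedT_zero[OF cspan_closed] unfolding IN_def IS_def by force
next
  fix x y assume "x \<in> Ipart K n" "y \<in> Ipart K n"
  then obtain x1 x2 y1 y2 where a: "x = (\<lambda>w. x1 w + x2 w)" "x1 \<in> IN K n" "x2 \<in> IS K n"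
    "y = (\<lambda>w. y1 w + y2 w)" "y1 \<in> IN K n" "y2 \<in> IS K n" unfolding Ipart_def by blast
  have h1: "(\<lambda>w. x1 w + y1 w) \<in> IN K n" and h2: "(\<lambda>w. x2 w + y2 w) \<in> IS K n"
    using a closedT_add[OF cspan_closed] unfolding IN_def IS_def by auto
  have e: "(\<lambda>w. x w + y w) = (\<lambda>w. (x1 w + y1 w) + (x2 w + y2 w))" using a by (simp add: algebra_simps)
  show "(\<lambda>w. x w + y w) \<in> Ipart K n" unfolding e by (rule Ipart_I[OF h1 h2])
next
  fix c x assume "x \<in> Ipart K n"
  then obtain x1 x2 where a: "x = (\<lambda>w. x1 w + x2 w)" "x1 \<in> IN K n" "x2 \<in> IS K n"
    unfolding Ipart_def by blast
  have h1: "(\<lambda>w. c * x1 w) \<in> IN K n" and h2: "(\<lambda>w. c * x2 w) \<in> IS K n"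
    using a closedT_smult[OF cspan_closed] unfolding IN_def IS_def by auto
  have e: "(\<lambda>w. c * x w) = (\<lambda>w. c * x1 w + c * x2 w)" using a by (simp add: algebra_simps)
  show "(\<lambda>w. c * x w) \<in> Ipart K n" unfolding e by (rule Ipart_I[OF h1 h2])
qed

lemma IN_Ipart: assumes "x \<in> IN K n" shows "x \<in> Ipart K n"
proof -
  have "(\<lambda>_. 0) \<in> IS K n" unfolding IS_def by (rule closedT_zero[OF cspan_closed])
  from Ipart_I[OF assms this] show ?thesis by simp
qed

lemma IS_Ipart: assumes "y \<in> IS K n" shows "y \<in> Ipart K n"
proof -
  have "(\<lambda>_. 0) \<in> IN K n" unfolding IN_def by (rule closedT_zero[OF cspan_closed])
  from Ipart_I[OF this assms] show ?thesis by simp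
qed

lemma dS_lin: "dS K x = lin (dstory K) x"
  unfolding dS_def lin_def by simp

lemma fin_genN: "g \<in> genN K n \<Longrightarrow> finite (supp g)"
  unfolding genN_def by (auto simp: supp_single)

lemma fin_genS: "g \<in> genS K n \<Longrightarrow> finite (supp g)"
proof -
  assume "g \<in> genS K n"
  then obtain u v where g: "g = (\<lambda>w. eps_story u * single u w - eps_story v * single v w)"
    unfolding genS_def by blast
  have "supp g \<subseteq> {u, v}" unfolding g supp_def single_def by auto
  then show ?thesis by (rule finite_subset) simp
qed

lemma dstory_unfair:
  assumes sc: "simplicial_complex V K" and st: "story K s" and nf: "\<not> fair s"
  shows "dstory K s \<in> Ipart K (length s)"
  unfolding dstory_split[OF sc_finite[OF sc]]
  by (rule Ipart_I[OF DU_in[OF sc_finite[OF sc] st] DF_unfair[OF sc st nf]])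

lemma swap_gen:
  fixes c eu ev eX eY a b :: complex
  assumes "c * c = 1" "eX = c * eu" "eY = c * ev"
  shows "eu * a - ev * b = c * (eX * a - eY * b)"
proof -
  have "c * (eX * a - eY * b) = (c * c) * (eu * a) - (c * c) * (ev * b)"
    unfolding assms(2,3) by (simp add: algebra_simps)
  then show ?thesis using assms(1) by simp
qed

lemma dS_genS:
  assumes sc: "simplicial_complex V K"
    and su: "story K u" and sv: "story K v" and fu: "fair u" and fv: "fair v"
    and lu: "length u = n + 1" and lv: "length v = n + 1" and hd: "hd u = hd v" and la: "last u = last v"
  shows "lin (dstory K) (\<lambda>w. eps_story u * single u w - eps_story v * single v w) \<in> Ipart K (n + 1)"
proof -
  have fK: "finite K" using sc_finite[OF sc] .
  have une: "u \<noteq> []" and vne: "v \<noteq> []" using su sv by (auto simp: story_def)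
  define A where "A = {Q\<in>K. fr Q (hd u)}"
  define B where "B = {Q\<in>K. fr (last u) Q}"
  have L: "lin (dstory K) (\<lambda>w. eps_story u * single u w - eps_story v * single v w)
      = (\<lambda>w. (ep u * DU K u w - ep v * DU K v w) + (ep u * DF K u w - ep v * DF K v w))"
  proof -
    have f1: "finite (supp (single u))" "finite (supp (single v))" by (simp_all add: supp_single)
    show ?thesis
      unfolding lin_diff[OF f1] lin_single eps_story_ep dstory_split[OF fK]
      apply (rule ext)
      apply (simp only: right_diff_distrib distrib_left diff_add_eq add_diff_eq diff_diff_eq2 add.assoc add.left_commute)
      by (simp add: diff_diff_eq)
  qed
  have p1: "(\<lambda>w. ep u * DU K u w - ep v * DU K v w) \<in> IN K (n + 1)"
  proof -
    have "DU K u \<in> cspan (genN K (n+1))" "DU K v \<in> cspan (genN K (n+1))"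
      using DU_in[OF fK su] DU_in[OF fK sv] lu lv unfolding IN_def by auto
    from closedT_diff[OF cspan_closed this] show ?thesis unfolding IN_def .
  qed
  have DFeq: "(\<lambda>w. ep u * DF K u w - ep v * DF K v w) =
     (\<lambda>w. (\<Sum>Q\<in>A. ep u * single (Q # u) w - ep v * single (Q # v) w)
        + (-1)^(n+1) * (\<Sum>Q\<in>B. ep u * single (u @ [Q]) w - ep v * single (v @ [Q]) w))"
    unfolding DF_fair[OF sc su fu] DF_fair[OF sc sv fv] A_def B_def hd la lu lv
    by (simp add: sum_subtractf sum_distrib_left algebra_simps)
  have fA: "finite A" "finite B" using fK unfolding A_def B_def by auto
  have pA: "(\<lambda>w. ep u * single (Q # u) w - ep v * single (Q # v) w) \<in> IS K (n + 1)" if Q: "Q \<in> A" for Q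
  proof -
    define c where "c = e2 Q (hd u)"
    have QK: "Q \<in> K" and fQ: "fr Q (hd u)" using Q unfolding A_def by auto
    have eX: "ep (Q # u) = c * ep u" unfolding c_def using une by (cases u) auto
    have eY: "ep (Q # v) = c * ep v" unfolding c_def hd using vne by (cases v) auto
    have gen: "(\<lambda>w. eps_story (Q # u) * single (Q # u) w - eps_story (Q # v) * single (Q # v) w) \<in> genS K (n + 1)"
    proof -
      have "story K (Q # u)" "story K (Q # v)" using su sv QK fr_neq[OF fQ] hd une vne
        unfolding story_succ by (auto simp: successively_Cons)
      moreover have "fair (Q # u)" "fair (Q # v)" using fu fv fQ hd une vne
        unfolding fair_succ by (auto simp: successively_Cons)
      moreover have "last (Q # u) = last (Q # v)" using la une vne by simp
      ultimately show ?thesis unfolding genS_def using lu lv by fastforce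
    qed
    have "(\<lambda>w. ep u * single (Q # u) w - ep v * single (Q # v) w) =
        (\<lambda>w. c * (eps_story (Q # u) * single (Q # u) w - eps_story (Q # v) * single (Q # v) w))"
    proof -
      have cc: "c * c = 1" unfolding c_def by (rule e2_sq)
      show ?thesis unfolding eps_story_ep by (intro ext) (rule swap_gen[OF cc eX eY])
    qed
    then show ?thesis using closedT_smult[OF cspan_closed cspan_base[OF gen]] unfolding IS_def by simp
  qed
  have pB: "(\<lambda>w. ep u * single (u @ [Q]) w - ep v * single (v @ [Q]) w) \<in> IS K (n + 1)" if Q: "Q \<in> B" for Q
  proof -
    define c where "c = e2 (last u) Q"
    have QK: "Q \<in> K" and fQ: "fr (last u) Q" using Q unfolding B_def by auto
    have eX: "ep (u @ [Q]) = c * ep u" unfolding c_def using ep_append[OF une, of "[Q]"] by simp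
    have eY: "ep (v @ [Q]) = c * ep v" unfolding c_def la using ep_append[OF vne, of "[Q]"] by simp
    have gen: "(\<lambda>w. eps_story (u @ [Q]) * single (u @ [Q]) w - eps_story (v @ [Q]) * single (v @ [Q]) w) \<in> genS K (n + 1)"
    proof -
      have "story K (u @ [Q])" "story K (v @ [Q])" using su sv QK fr_neq[OF fQ] la une vne
        unfolding story_succ by (auto simp: successively_append_iff)
      moreover have "fair (u @ [Q])" "fair (v @ [Q])" using fu fv fQ la une vne
        unfolding fair_succ by (auto simp: successively_append_iff)
      moreover have "hd (u @ [Q]) = hd (v @ [Q])" using hd une vne by simp
      ultimately show ?thesis unfolding genS_def using lu lv by fastforce
    qed
    have "(\<lambda>w. ep u * single (u @ [Q]) w - ep v * single (v @ [Q]) w) =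
        (\<lambda>w. c * (eps_story (u @ [Q]) * single (u @ [Q]) w - eps_story (v @ [Q]) * single (v @ [Q]) w))"
    proof -
      have cc: "c * c = 1" unfolding c_def by (rule e2_sq)
      show ?thesis unfolding eps_story_ep by (intro ext) (rule swap_gen[OF cc eX eY])
    qed
    then show ?thesis using closedT_smult[OF cspan_closed cspan_base[OF gen]] unfolding IS_def by simp
  qed
  have p2: "(\<lambda>w. ep u * DF K u w - ep v * DF K v w) \<in> IS K (n + 1)"
    unfolding DFeq IS_def
    by (rule closedT_add[OF cspan_closed closedT_sum1[OF cspan_closed fA(1)]
          closedT_smult[OF cspan_closed closedT_sum1[OF cspan_closed fA(2)]]])
       (use pA pB in \<open>auto simp: IS_def\<close>)
  show ?thesis unfolding L by (rule Ipart_I[OF p1 p2])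
qed



lemma part2:
  assumes sc: "simplicial_complex V K" and x: "x \<in> Ipart K n"
  shows "dS K x \<in> Ipart K (n + 1)"
proof -
  obtain y z where xyz: "x = (\<lambda>w. y w + z w)" "y \<in> IN K n" "z \<in> IS K n"
    using x unfolding Ipart_def by blast
  have fy: "finite (supp y)" using cspan_fin[of "genN K n" y] fin_genN xyz(2) unfolding IN_def by blast
  have fz: "finite (supp z)" using cspan_fin[of "genS K n" z] fin_genS xyz(3) unfolding IS_def by blast
  have dy: "lin (dstory K) y \<in> Ipart K (n+1)"
  proof (rule lin_cspan_into[OF Ipart_closed])
    show "y \<in> cspan (genN K n)" using xyz unfolding IN_def by simp
    show "\<forall>g\<in>genN K n. finite (supp g) \<and> lin (dstory K) g \<in> Ipart K (n+1)"
    proof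
      fix g assume g: "g \<in> genN K n"
      then obtain s where s: "g = single s" "story K s" "length s = n+1" "\<not> fair s"
        unfolding genN_def by blast
      show "finite (supp g) \<and> lin (dstory K) g \<in> Ipart K (n+1)"
        using fin_genN[OF g] dstory_unfair[OF sc s(2) s(4)] s(1,3) by (simp add: lin_single)
    qed
  qed
  have dz: "lin (dstory K) z \<in> Ipart K (n+1)"
  proof (rule lin_cspan_into[OF Ipart_closed])
    show "z \<in> cspan (genS K n)" using xyz unfolding IS_def by simp
    show "\<forall>g\<in>genS K n. finite (supp g) \<and> lin (dstory K) g \<in> Ipart K (n+1)"
    proof
      fix g assume g: "g \<in> genS K n"
      then obtain u v where uv: "g = (\<lambda>w. eps_story u * single u w - eps_story v * single v w)"
        "story K u" "story K v" "length u = n + 1" "length v = n + 1" "fair u" "fair v"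
        "hd u = hd v" "last u = last v"
        unfolding genS_def by blast
      show "finite (supp g) \<and> lin (dstory K) g \<in> Ipart K (n+1)"
        using fin_genS[OF g] dS_genS[OF sc uv(2,3,6,7,4,5,8,9)] uv(1) by simp
    qed
  qed
  show ?thesis unfolding dS_lin xyz(1) lin_add[OF fy fz] by (rule closedT_add[OF Ipart_closed dy dz])
qed

lemma genN_Ideal: "1 \<le> m \<Longrightarrow> g \<in> genN K m \<Longrightarrow> g \<in> Ideal K"
  unfolding Ideal_def by (rule cspan_base) auto

lemma genS_Ideal: "1 \<le> m \<Longrightarrow> g \<in> genS K m \<Longrightarrow> g \<in> Ideal K"
  unfolding Ideal_def by (rule cspan_base) auto

lemma Ipart_Ideal:
  assumes "1 \<le> m" "x \<in> Ipart K m"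
  shows "x \<in> Ideal K"
proof -
  obtain y z where xyz: "x = (\<lambda>w. y w + z w)" "y \<in> IN K m" "z \<in> IS K m"
    using assms(2) unfolding Ipart_def by blast
  have "IN K m \<subseteq> Ideal K" unfolding IN_def
    by (rule cspan_sub[OF cspan_closed[of "\<Union>n\<in>{1..}. genN K n \<union> genS K n", folded Ideal_def]])
       (use genN_Ideal[OF assms(1)] in blast)
  moreover have "IS K m \<subseteq> Ideal K" unfolding IS_def
    by (rule cspan_sub[OF cspan_closed[of "\<Union>n\<in>{1..}. genN K n \<union> genS K n", folded Ideal_def]])
       (use genS_Ideal[OF assms(1)] in blast)
  ultimately show ?thesis unfolding xyz(1) using xyz(2,3)
    by (intro closedT_add[OF cspan_closed[of "\<Union>n\<in>{1..}. genN K n \<union> genS K n", folded Ideal_def]]) auto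
qed

lemma part3:
  assumes sc: "simplicial_complex V K" and x: "x \<in> Ideal K"
  shows "dS K x \<in> Ideal K"
  unfolding dS_lin
proof (rule lin_cspan_into[OF cspan_closed[of "\<Union>n\<in>{1..}. genN K n \<union> genS K n", folded Ideal_def]])
  show "x \<in> cspan (\<Union>n\<in>{1..}. genN K n \<union> genS K n)" using x unfolding Ideal_def .
  show "\<forall>g\<in>\<Union>n\<in>{1..}. genN K n \<union> genS K n. finite (supp g) \<and> lin (dstory K) g \<in> Ideal K"
  proof
    fix g assume "g \<in> (\<Union>n\<in>{1..}. genN K n \<union> genS K n)"
    then obtain n where n: "1 \<le> n" "g \<in> genN K n \<or> g \<in> genS K n" by auto
    have fg: "finite (supp g)" using n(2) fin_genN fin_genS by blast
    have "g \<in> Ipart K n" using n(2) IN_Ipart IS_Ipart cspan_base unfolding IN_def IS_def by blast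
    then have "dS K g \<in> Ipart K (n + 1)" by (rule part2[OF sc])
    then have "dS K g \<in> Ideal K" by (rule Ipart_Ideal[rotated]) (use n in simp)
    then show "finite (supp g) \<and> lin (dstory K) g \<in> Ideal K" using fg unfolding dS_lin by simp
  qed
qed



definition TT :: "'a set list \<Rightarrow> 'a set list \<Rightarrow> 'a set list \<Rightarrow> complex" where
  "TT u v = (\<lambda>w. if u \<noteq> [] \<and> v \<noteq> [] \<and> last u = hd v then single (u @ tl v) w else 0)"

definition LMul :: "('a set list \<Rightarrow> complex) \<Rightarrow> 'a set list \<Rightarrow> 'a set list \<Rightarrow> complex" where
  "LMul a v = (\<lambda>w. \<Sum>u\<in>supp a. a u * TT u v w)"

definition RMul :: "('a set list \<Rightarrow> complex) \<Rightarrow> 'a set list \<Rightarrow> 'a set list \<Rightarrow> complex" where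
  "RMul a u = (\<lambda>w. \<Sum>v\<in>supp a. a v * TT u v w)"

lemma smult_left: "smult a x = lin (LMul a) x"
proof
  fix w
  have "smult a x w = (\<Sum>u\<in>supp a. \<Sum>v\<in>supp x. x v * (a u * TT u v w))"
    unfolding smult_def TT_def single_def by (intro sum.cong refl) auto
  also have "\<dots> = (\<Sum>v\<in>supp x. \<Sum>u\<in>supp a. x v * (a u * TT u v w))" by (rule sum.swap)
  also have "\<dots> = lin (LMul a) x w" unfolding lin_def LMul_def by (simp add: sum_distrib_left)
  finally show "smult a x w = lin (LMul a) x w" .
qed

lemma smult_right: "smult x a = lin (RMul a) x"
proof
  fix w
  have "smult x a w = (\<Sum>u\<in>supp x. \<Sum>v\<in>supp a. x u * (a v * TT u v w))"
    unfolding smult_def TT_def single_def by (intro sum.cong refl) auto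
  also have "\<dots> = lin (RMul a) x w" unfolding lin_def RMul_def by (simp add: sum_distrib_left)
  finally show "smult x a w = lin (RMul a) x w" .
qed

lemma concat_story: "story K u \<Longrightarrow> story K v \<Longrightarrow> last u = hd v \<Longrightarrow> story K (u @ tl v)"
  unfolding story_succ using succ_concat
  by (auto dest: list.set_sel(2))

lemma concat_fair: "u \<noteq> [] \<Longrightarrow> v \<noteq> [] \<Longrightarrow> last u = hd v \<Longrightarrow> fair (u @ tl v) \<longleftrightarrow> fair u \<and> fair v"
  unfolding fair_succ by (rule succ_concat)

lemma concat_last: "u \<noteq> [] \<Longrightarrow> v \<noteq> [] \<Longrightarrow> last u = hd v \<Longrightarrow> last (u @ tl v) = last v"
  by (cases v) auto

lemma concat_hd: "u \<noteq> [] \<Longrightarrow> hd (u @ tl v) = hd u"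
  by simp

lemma concat_len: "v \<noteq> [] \<Longrightarrow> length (u @ tl v) = length u + length v - 1"
  by (cases v) auto

lemma TT_unfair:
  assumes su: "story K u" and sv: "story K v" and nf: "\<not> (fair u \<and> fair v)"
    and len: "3 \<le> length u + length v"
  shows "TT u v \<in> Ideal K"
proof (cases "last u = hd v")
  case False
  then have "TT u v = (\<lambda>_. 0)" unfolding TT_def by auto
  then show ?thesis using closedT_zero[OF cspan_closed] unfolding Ideal_def by simp
next
  case True
  have une: "u \<noteq> []" and vne: "v \<noteq> []" using su sv by (auto simp: story_def)
  define m where "m = length u + length v - 2"
  have e: "TT u v = single (u @ tl v)" unfolding TT_def using True une vne by auto
  have "single (u @ tl v) \<in> genN K m"
  proof -
    have "story K (u @ tl v)" using concat_story[OF su sv True] .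
    moreover have "\<not> fair (u @ tl v)" using concat_fair[OF une vne True] nf by simp
    moreover have "length (u @ tl v) = m + 1" using concat_len[OF vne, of u] len unfolding m_def by simp
    ultimately show ?thesis unfolding genN_def by blast
  qed
  moreover have "1 \<le> m" using len unfolding m_def by simp
  ultimately show ?thesis unfolding e using genN_Ideal by blast
qed

lemma Ideal_closed: "closedT (Ideal K)"
  unfolding Ideal_def by (rule cspan_closed)

lemma TT_S_left:
  assumes su: "story K u" and sv: "story K v" and sv': "story K v'" and fv: "fair v" and fv': "fair v'"
    and lv: "length v = n + 1" and lv': "length v' = n + 1" and n: "1 \<le> n"
    and hd: "hd v = hd v'" and la: "last v = last v'"
  shows "(\<lambda>w. ep v * TT u v w - ep v' * TT u v' w) \<in> Ideal K"
proof -
  have une: "u \<noteq> []" and vne: "v \<noteq> []" and vne': "v' \<noteq> []" using su sv sv' by (auto simp: story_def)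
  show ?thesis
  proof (cases "last u = hd v")
    case False
    then have "(\<lambda>w. ep v * TT u v w - ep v' * TT u v' w) = (\<lambda>_. 0)" unfolding TT_def using hd by auto
    then show ?thesis using closedT_zero[OF Ideal_closed] by simp
  next
    case True
    then have True': "last u = hd v'" using hd by simp
    define X where "X = u @ tl v"
    define Y where "Y = u @ tl v'"
    define m where "m = length u + n - 1"
    have e: "(\<lambda>w. ep v * TT u v w - ep v' * TT u v' w) = (\<lambda>w. ep v * single X w - ep v' * single Y w)"
      unfolding TT_def X_def Y_def using True True' une vne vne' by auto
    have sX: "story K X" "story K Y" unfolding X_def Y_def
      using concat_story[OF su sv True] concat_story[OF su sv' True'] by auto
    have lX: "length X = m + 1" "length Y = m + 1" unfolding X_def Y_def m_def
      using concat_len[OF vne, of u] concat_len[OF vne', of u] lv lv' une by (auto simp: Suc_le_eq)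
    have m1: "1 \<le> m" unfolding m_def using n une by (cases u) auto
    show ?thesis
    proof (cases "fair u")
      case True2: True
      have fX: "fair X" "fair Y" unfolding X_def Y_def
        using concat_fair[OF une vne True] concat_fair[OF une vne' True'] True2 fv fv' by auto
      have hX: "hd X = hd Y" unfolding X_def Y_def using une by simp
      have laX: "last X = last Y" unfolding X_def Y_def
        using concat_last[OF une vne True] concat_last[OF une vne' True'] la by simp
      have gen: "(\<lambda>w. eps_story X * single X w - eps_story Y * single Y w) \<in> genS K m"
        unfolding genS_def using sX lX fX hX laX by blast
      have eX: "ep X = ep u * ep v" "ep Y = ep u * ep v'"
        unfolding X_def Y_def using ep_concat[OF une vne True] ep_concat[OF une vne' True'] by auto
      have "(\<lambda>w. ep v * single X w - ep v' * single Y w) =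
          (\<lambda>w. ep u * (eps_story X * single X w - eps_story Y * single Y w))"
        unfolding eps_story_ep by (intro ext) (rule swap_gen[OF ep_sq eX])
      then show ?thesis unfolding e
        using closedT_smult[OF Ideal_closed genS_Ideal[OF m1 gen]] by simp
    next
      case False
      have "single X \<in> genN K m" "single Y \<in> genN K m"
        unfolding genN_def using sX lX False concat_fair[OF une vne True] concat_fair[OF une vne' True']
        unfolding X_def Y_def by auto
      then show ?thesis unfolding e using closedT_diff[OF Ideal_closed] genN_Ideal[OF m1] by blast
    qed
  qed
qed

lemma TT_S_right:
  assumes su: "story K u" and sv: "story K v" and sv': "story K v'" and fv: "fair v" and fv': "fair v'"
    and lv: "length v = n + 1" and lv': "length v' = n + 1" and n: "1 \<le> n"
    and hd: "hd v = hd v'" and la: "last v = last v'"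
  shows "(\<lambda>w. ep v * TT v u w - ep v' * TT v' u w) \<in> Ideal K"
proof -
  have une: "u \<noteq> []" and vne: "v \<noteq> []" and vne': "v' \<noteq> []" using su sv sv' by (auto simp: story_def)
  show ?thesis
  proof (cases "last v = hd u")
    case False
    then have "(\<lambda>w. ep v * TT v u w - ep v' * TT v' u w) = (\<lambda>_. 0)" unfolding TT_def using la by auto
    then show ?thesis using closedT_zero[OF Ideal_closed] by simp
  next
    case True
    then have True': "last v' = hd u" using la by simp
    define X where "X = v @ tl u"
    define Y where "Y = v' @ tl u"
    define m where "m = length u + n - 1"
    have e: "(\<lambda>w. ep v * TT v u w - ep v' * TT v' u w) = (\<lambda>w. ep v * single X w - ep v' * single Y w)"
      unfolding TT_def X_def Y_def using True True' une vne vne' by auto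
    have sX: "story K X" "story K Y" unfolding X_def Y_def
      using concat_story[OF sv su True] concat_story[OF sv' su True'] by auto
    have lX: "length X = m + 1" "length Y = m + 1" unfolding X_def Y_def m_def
      using concat_len[OF une, of v] concat_len[OF une, of v'] lv lv' une by (auto simp: Suc_le_eq)
    have m1: "1 \<le> m" unfolding m_def using n une by (cases u) auto
    show ?thesis
    proof (cases "fair u")
      case True2: True
      have fX: "fair X" "fair Y" unfolding X_def Y_def
        using concat_fair[OF vne une True] concat_fair[OF vne' une True'] True2 fv fv' by auto
      have hX: "hd X = hd Y" unfolding X_def Y_def using vne vne' hd by simp
      have laX: "last X = last Y" unfolding X_def Y_def
        using concat_last[OF vne une True] concat_last[OF vne' une True'] by simp
      have gen: "(\<lambda>w. eps_story X * single X w - eps_story Y * single Y w) \<in> genS K m"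
        unfolding genS_def using sX lX fX hX laX by blast
      have eX: "ep X = ep u * ep v" "ep Y = ep u * ep v'"
        unfolding X_def Y_def using ep_concat[OF vne une True] ep_concat[OF vne' une True'] by auto
      have "(\<lambda>w. ep v * single X w - ep v' * single Y w) =
          (\<lambda>w. ep u * (eps_story X * single X w - eps_story Y * single Y w))"
        unfolding eps_story_ep by (intro ext) (rule swap_gen[OF ep_sq eX])
      then show ?thesis unfolding e
        using closedT_smult[OF Ideal_closed genS_Ideal[OF m1 gen]] by simp
    next
      case False
      have "single X \<in> genN K m" "single Y \<in> genN K m"
        unfolding genN_def using sX lX False concat_fair[OF vne une True] concat_fair[OF vne' une True']
        unfolding X_def Y_def by auto
      then show ?thesis unfolding e using closedT_diff[OF Ideal_closed] genN_Ideal[OF m1] by blast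
    qed
  qed
qed



lemma gen_cases:
  assumes "g \<in> (\<Union>n\<in>{1..}. genN K n \<union> genS K n)"
  shows "(\<exists>n v. 1 \<le> n \<and> g = single v \<and> story K v \<and> length v = n+1 \<and> \<not> fair v) \<or>
    (\<exists>n v v'. 1 \<le> n \<and> g = (\<lambda>w. eps_story v * single v w - eps_story v' * single v' w) \<and>
       story K v \<and> story K v' \<and> length v = n+1 \<and> length v' = n+1 \<and> fair v \<and> fair v' \<and>
       hd v = hd v' \<and> last v = last v')"
proof -
  obtain n where n: "1 \<le> n" "g \<in> genN K n \<or> g \<in> genS K n" using assms by auto
  from n(2) show ?thesis
  proof
    assume "g \<in> genN K n" then show ?thesis unfolding genN_def using n(1) by blast
  next
    assume "g \<in> genS K n" then show ?thesis unfolding genS_def using n(1) by blast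
  qed
qed

lemma part1:
  assumes x: "x \<in> Ideal K" and a: "elem K a"
  shows "smult a x \<in> Ideal K \<and> smult x a \<in> Ideal K"
proof -
  have fa: "finite (supp a)" and sa: "\<forall>u\<in>supp a. story K u" using a unfolding elem_def by auto
  have xG: "x \<in> cspan (\<Union>n\<in>{1..}. genN K n \<union> genS K n)" using x unfolding Ideal_def .
  have fing: "finite (supp g)" if "g \<in> (\<Union>n\<in>{1..}. genN K n \<union> genS K n)" for g
    using that fin_genN fin_genS by blast
  have lenu: "1 \<le> length u" if "u \<in> supp a" for u
    using sa that by (cases u) (auto simp: story_def)
  have L: "smult a x \<in> Ideal K"
    unfolding smult_left
  proof (rule lin_cspan_into[OF Ideal_closed xG], intro ballI conjI)
    fix g assume g: "g \<in> (\<Union>n\<in>{1..}. genN K n \<union> genS K n)"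
    show "finite (supp g)" using fing[OF g] .
    show "lin (LMul a) g \<in> Ideal K"
      using gen_cases[OF g]
    proof (elim disjE exE conjE)
      fix n v assume h: "1 \<le> n" "g = single v" "story K v" "length v = n+1" "\<not> fair v"
      have "lin (LMul a) g = (\<lambda>w. \<Sum>u\<in>supp a. a u * TT u v w)" unfolding h(2) lin_single LMul_def ..
      moreover have "(\<lambda>w. \<Sum>u\<in>supp a. a u * TT u v w) \<in> Ideal K"
      proof (rule closedT_sum[OF Ideal_closed fa], rule ballI)
        fix u assume u: "u \<in> supp a"
        show "TT u v \<in> Ideal K"
          by (rule TT_unfair[OF sa[rule_format, OF u] h(3)]) (use h lenu[OF u] in auto)
      qed
      ultimately show ?thesis by simp
    next
      fix n v v' assume h: "1 \<le> n" "g = (\<lambda>w. eps_story v * single v w - eps_story v' * single v' w)"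
        "story K v" "story K v'" "length v = n+1" "length v' = n+1" "fair v" "fair v'"
        "hd v = hd v'" "last v = last v'"
      have f1: "finite (supp (single v))" "finite (supp (single v'))" by (simp_all add: supp_single)
      have "lin (LMul a) g = (\<lambda>w. \<Sum>u\<in>supp a. a u * (ep v * TT u v w - ep v' * TT u v' w))"
        unfolding h(2) lin_diff[OF f1] lin_single LMul_def eps_story_ep
        by (rule ext) (simp add: sum_distrib_left right_diff_distrib sum_subtractf mult.left_commute)
      moreover have "(\<lambda>w. \<Sum>u\<in>supp a. a u * (ep v * TT u v w - ep v' * TT u v' w)) \<in> Ideal K"
      proof (rule closedT_sum[OF Ideal_closed fa], rule ballI)
        fix u assume u: "u \<in> supp a"
        show "(\<lambda>w. ep v * TT u v w - ep v' * TT u v' w) \<in> Ideal K"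
          by (rule TT_S_left[OF sa[rule_format, OF u] h(3,4,7,8,5,6,1,9,10)])
      qed
      ultimately show ?thesis by simp
    qed
  qed
  have R: "smult x a \<in> Ideal K"
    unfolding smult_right
  proof (rule lin_cspan_into[OF Ideal_closed xG], intro ballI conjI)
    fix g assume g: "g \<in> (\<Union>n\<in>{1..}. genN K n \<union> genS K n)"
    show "finite (supp g)" using fing[OF g] .
    show "lin (RMul a) g \<in> Ideal K"
      using gen_cases[OF g]
    proof (elim disjE exE conjE)
      fix n v assume h: "1 \<le> n" "g = single v" "story K v" "length v = n+1" "\<not> fair v"
      have "lin (RMul a) g = (\<lambda>w. \<Sum>u\<in>supp a. a u * TT v u w)" unfolding h(2) lin_single RMul_def ..
      moreover have "(\<lambda>w. \<Sum>u\<in>supp a. a u * TT v u w) \<in> Ideal K"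
      proof (rule closedT_sum[OF Ideal_closed fa], rule ballI)
        fix u assume u: "u \<in> supp a"
        show "TT v u \<in> Ideal K"
          by (rule TT_unfair[OF h(3) sa[rule_format, OF u]]) (use h lenu[OF u] in auto)
      qed
      ultimately show ?thesis by simp
    next
      fix n v v' assume h: "1 \<le> n" "g = (\<lambda>w. eps_story v * single v w - eps_story v' * single v' w)"
        "story K v" "story K v'" "length v = n+1" "length v' = n+1" "fair v" "fair v'"
        "hd v = hd v'" "last v = last v'"
      have f1: "finite (supp (single v))" "finite (supp (single v'))" by (simp_all add: supp_single)
      have "lin (RMul a) g = (\<lambda>w. \<Sum>u\<in>supp a. a u * (ep v * TT v u w - ep v' * TT v' u w))"
        unfolding h(2) lin_diff[OF f1] lin_single RMul_def eps_story_ep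
        by (rule ext) (simp add: sum_distrib_left right_diff_distrib sum_subtractf mult.left_commute)
      moreover have "(\<lambda>w. \<Sum>u\<in>supp a. a u * (ep v * TT v u w - ep v' * TT v' u w)) \<in> Ideal K"
      proof (rule closedT_sum[OF Ideal_closed fa], rule ballI)
        fix u assume u: "u \<in> supp a"
        show "(\<lambda>w. ep v * TT v u w - ep v' * TT v' u w) \<in> Ideal K"
          by (rule TT_S_right[OF sa[rule_format, OF u] h(3,4,7,8,5,6,1,9,10)])
      qed
      ultimately show ?thesis by simp
    qed
  qed
  show ?thesis using L R by simp
qed

theorem mainTheorem2:
  fixes V :: "'a::linorder set" and K :: "'a set set"
  assumes "simplicial_complex V K"
  shows "(\<forall>x\<in>Ideal K. \<forall>a. elem K a \<longrightarrow> smult a x \<in> Ideal K \<and> smult x a \<in> Ideal K)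
       \<and> (\<forall>n\<ge>1. \<forall>x\<in>Ipart K n. dS K x \<in> Ipart K (n + 1))
       \<and> (\<forall>x\<in>Ideal K. dS K x \<in> Ideal K)"
  using part1 part2[OF assms] part3[OF assms] by blast


end
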